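(* Consider two coplanar ellipses with a common focus at the origin of $\mathbb{R}^2$, parametrized by their true anomalies $f_1,f_2$: \[ \mathcal{X}_1(f_1)=\frac{p_1}{1+e_1\cos f_1}(\cos f_1,\ \sin f_1),\qquad \mathcal{X}_2(f_2)=\frac{p_2}{1+e_2\cos f_2}\bigl(\cos(f_2+\omega_2),\ \sin(f_2+\omega_2)\bigr), \] with $p_1,p_2>0$, $e_1,e_2\in[0,1)$, $\omega_2\in\mathbb{R}$, and let $d^2(f_1,f_2)=|\mathcal{X}_1(f_1)-\mathcal{X}_2(f_2)|^2$ on the torus $(\mathbb{R}/2\pi\mathbb{Z})^2$. Then, in general (i.e. for generic values of $p_1,p_2,e_1,e_2,\omega_2$), the function $d^2$ has at most $10$ critical points that do not correspond to trajectory intersections (points with $d^2(f_1,f_2)=0$), and hence at most $12$ critical points in total.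
   Context: A critical point of $d^2$ is a point $(f_1,f_2)$ where both partial derivatives of $d^2$ vanish; a trajectory intersection is a critical point with $d^2(f_1,f_2)=0$. *)

theory Defs
  imports "HOL-Analysis.Analysis"
begin

definition X1 :: "real \<Rightarrow> real \<Rightarrow> real \<Rightarrow> real \<times> real" where
  "X1 p1 e1 f1 = (p1 / (1 + e1 * cos f1) * cos f1, p1 / (1 + e1 * cos f1) * sin f1)"

definition X2 :: "real \<Rightarrow> real \<Rightarrow> real \<Rightarrow> real \<Rightarrow> real \<times> real" where
  "X2 p2 e2 om2 f2 = (p2 / (1 + e2 * cos f2) * cos (f2 + om2), p2 / (1 + e2 * cos f2) * sin (f2 + om2))"

definition dist2 :: "real \<Rightarrow> real \<Rightarrow> real \<Rightarrow> real \<Rightarrow> real \<Rightarrow> real \<Rightarrow> real \<Rightarrow> real" where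
  "dist2 p1 p2 e1 e2 om2 f1 f2 =
     (fst (X1 p1 e1 f1) - fst (X2 p2 e2 om2 f2))\<^sup>2 + (snd (X1 p1 e1 f1) - snd (X2 p2 e2 om2 f2))\<^sup>2"

definition crit_point :: "real \<Rightarrow> real \<Rightarrow> real \<Rightarrow> real \<Rightarrow> real \<Rightarrow> real \<Rightarrow> real \<Rightarrow> bool" where
  "crit_point p1 p2 e1 e2 om2 f1 f2 \<longleftrightarrow>
     ((\<lambda>x. dist2 p1 p2 e1 e2 om2 x f2) has_real_derivative 0) (at f1) \<and>
     ((\<lambda>y. dist2 p1 p2 e1 e2 om2 f1 y) has_real_derivative 0) (at f2)"

text \<open>Critical points on the torus (R/2piZ)^2, represented by the fundamental domain [0,2pi)^2.\<close>
definition crit_points :: "real \<Rightarrow> real \<Rightarrow> real \<Rightarrow> real \<Rightarrow> real \<Rightarrow> (real \<times> real) set" where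
  "crit_points p1 p2 e1 e2 om2 =
     {(f1, f2). f1 \<in> {0..<2*pi} \<and> f2 \<in> {0..<2*pi} \<and> crit_point p1 p2 e1 e2 om2 f1 f2}"

end

theory Submission
  imports Defs "HOL-Computational_Algebra.Polynomial"
begin

lemma pos_den: "0 \<le> e \<Longrightarrow> e < (1::real) \<Longrightarrow> 1 + e * cos x > 0"
proof -
  assume "0 \<le> e" "e < 1"
  have "e * cos x \<ge> - e" using \<open>0 \<le> e\<close> cos_ge_minus_one[of x]
    by (metis minus_mult_right mult.right_neutral mult_left_mono neg_le_iff_le cos_ge_minus_one)
  thus ?thesis using \<open>e < 1\<close> by linarith
qed

definition Zs :: "(real \<times> real \<times> real \<times> real \<times> real) set" where
  "Zs = {q. fst (snd (snd (snd q))) * sin (snd (snd (snd (snd q)))) = 0}"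

lemma Zs_closed: "closed Zs"
  unfolding Zs_def
  by (intro closed_Collect_eq continuous_intros) 

lemma Zs_null: "Zs \<in> null_sets lborel"
proof -
  have eq: "Zs = {x. (0::real,0::real,0::real,1::real,0::real) \<bullet> x = 0} \<union>
      (\<Union>i\<in>(UNIV::int set). {x. (0::real,0::real,0::real,0::real,1::real) \<bullet> x = of_int i * pi})"
    unfolding Zs_def by (auto simp: sin_zero_iff_int2)
  have n1: "(0::real,0::real,0::real,1::real,0::real) \<noteq> 0" by (simp add: zero_prod_def)
  have n2: "(0::real,0::real,0::real,0::real,1::real) \<noteq> 0" by (simp add: zero_prod_def)
  have "negligible Zs"
    unfolding eq
    by (intro negligible_Un negligible_countable_Union negligible_hyperplane ballI) (use n1 n2 in \<open>auto intro: negligible_hyperplane\<close>)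
  hence "Zs \<in> null_sets lebesgue" by (simp add: negligible_iff_null_sets)
  moreover have "Zs \<in> sets lborel" using Zs_closed by (simp add: borel_closed)
  ultimately show ?thesis by (metis null_sets_completion_iff)
qed
lemma dX:
  fixes p e a :: real
  assumes nz: "1 + e * cos t \<noteq> 0"
  shows "((\<lambda>x. p / (1 + e * cos x) * cos (x + a)) has_real_derivative
           p/(1+e*cos t)^2 * (- sin (t + a) - e * sin a)) (at t)"
  apply (rule derivative_eq_intros refl | simp add: nz)+
  apply (simp add: divide_simps nz)
  apply (simp add: sin_add cos_add algebra_simps)
  using sin_cos_squared_add[of t] by algebra

lemma dY:
  fixes p e a :: real
  assumes nz: "1 + e * cos t \<noteq> 0"
  shows "((\<lambda>x. p / (1 + e * cos x) * sin (x + a)) has_real_derivative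
           p/(1+e*cos t)^2 * (cos (t + a) + e * cos a)) (at t)"
  apply (rule derivative_eq_intros refl | simp add: nz)+
  apply (simp add: divide_simps nz)
  apply (simp add: sin_add cos_add algebra_simps)
  using sin_cos_squared_add[of t] by algebra

lemma sq_sum:
  fixes f g :: "real \<Rightarrow> real"
  assumes "(f has_real_derivative Df) (at t)" "(g has_real_derivative Dg) (at t)"
  shows "((\<lambda>x. (f x - A)^2 + (g x - B)^2) has_real_derivative 2*(f t - A)*Df + 2*(g t - B)*Dg) (at t)"
  by (rule derivative_eq_intros assms refl | simp add: algebra_simps)+

lemma deriv_gen:
  fixes A B p e a :: real
  assumes nz: "1 + e * cos t \<noteq> 0"
  shows "((\<lambda>x. (p / (1 + e * cos x) * cos (x + a) - A)\<^sup>2 + (p / (1 + e * cos x) * sin (x + a) - B)\<^sup>2)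
     has_real_derivative
     (2 * (p / (1 + e * cos t) * cos (t + a) - A) * (p/(1+e*cos t)^2 * (- sin (t + a) - e * sin a))
      + 2 * (p / (1 + e * cos t) * sin (t + a) - B) * (p/(1+e*cos t)^2 * (cos (t + a) + e * cos a)))) (at t)"
  using sq_sum[OF dX[OF nz, where p=p and a=a] dY[OF nz, where p=p and a=a], where A=A and B=B] by simp

lemma deriv_gen_neg:
  fixes A B p e a :: real
  assumes nz: "1 + e * cos t \<noteq> 0"
  shows "((\<lambda>x. (A - p / (1 + e * cos x) * cos (x + a))\<^sup>2 + (B - p / (1 + e * cos x) * sin (x + a))\<^sup>2)
     has_real_derivative
     (2 * (p / (1 + e * cos t) * cos (t + a) - A) * (p/(1+e*cos t)^2 * (- sin (t + a) - e * sin a))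
      + 2 * (p / (1 + e * cos t) * sin (t + a) - B) * (p/(1+e*cos t)^2 * (cos (t + a) + e * cos a)))) (at t)"
proof -
  have "(\<lambda>x. (A - p / (1 + e * cos x) * cos (x + a))\<^sup>2 + (B - p / (1 + e * cos x) * sin (x + a))\<^sup>2)
     = (\<lambda>x. (p / (1 + e * cos x) * cos (x + a) - A)\<^sup>2 + (p / (1 + e * cos x) * sin (x + a) - B)\<^sup>2)"
    by (simp add: power2_commute)
  thus ?thesis using deriv_gen[OF nz, where p=p and a=a and A=A and B=B] by (simp only:)
qed
lemma core:
  fixes c s C S e1 k l p1 p2 :: real
  assumes cs: "c^2 + s^2 = 1" and CS: "C^2 + S^2 = 1"
    and e1: "0 \<le> e1" "e1 < 1"
    and u1: "1 + e1 * c > 0" and u2: "1 + k * C + l * S > 0"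
    and eq1: "(p1 * c / (1 + e1 * c) - p2 * C / (1 + k * C + l * S)) * (- s)
            + (p1 * s / (1 + e1 * c) - p2 * S / (1 + k * C + l * S)) * (c + e1) = 0"
    and eq2: "(p1 * c / (1 + e1 * c) - p2 * C / (1 + k * C + l * S)) * (- S - l)
            + (p1 * s / (1 + e1 * c) - p2 * S / (1 + k * C + l * S)) * (C + k) = 0"
    and ne: "(p1 * c / (1 + e1 * c), p1 * s / (1 + e1 * c)) \<noteq> (p2 * C / (1 + k * C + l * S), p2 * S / (1 + k * C + l * S))"
  defines "n \<equiv> (c + e1)^2 + s^2"
  defines "lam \<equiv> ((C + k) * (c + e1) + (S + l) * s) / n"
  defines "E \<equiv> k * (c + e1) + l * s"
  defines "F \<equiv> l * (c + e1) - k * s"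
  shows "C = lam * (c + e1) - k" "S = lam * s - l"
    "lam * (p1 * e1 * s * E) = - (p1 * e1 * s * (1 - k^2 - l^2) + p2 * (1 + e1 * c) * F)"
    "n * lam^2 - 2 * E * lam - (1 - k^2 - l^2) = 0"
proof -
  have npos: "n > 0"
  proof -
    have n0: "n \<ge> 0" unfolding n_def by simp
    have "n \<noteq> 0"
    proof
      assume "n = 0"
      hence "s = 0" "c + e1 = 0" unfolding n_def by (simp_all add: add_nonneg_eq_0_iff)
      hence "c = - e1" "s = 0" by linarith+
      hence "e1^2 = 1" using cs by simp
      moreover have "e1^2 < 1^2" using e1 by (intro power_strict_mono) auto
      ultimately show False by simp
    qed
    thus ?thesis using n0 by simp
  qed
  define dx where "dx = p1 * c / (1 + e1 * c) - p2 * C / (1 + k * C + l * S)"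
  define dy where "dy = p1 * s / (1 + e1 * c) - p2 * S / (1 + k * C + l * S)"
  have q1: "dx * (- s) + dy * (c + e1) = 0" using eq1 unfolding dx_def dy_def .
  have q2: "dx * (- S - l) + dy * (C + k) = 0" using eq2 unfolding dx_def dy_def .
  have dne: "dx \<noteq> 0 \<or> dy \<noteq> 0" using ne unfolding dx_def dy_def by auto
  have cross: "(c + e1) * (S + l) - s * (C + k) = 0"
  proof (rule ccontr)
    assume h: "(c + e1) * (S + l) - s * (C + k) \<noteq> 0"
    have "((c + e1) * (S + l) - s * (C + k)) * dx = (C + k) * (dx * (- s) + dy * (c + e1)) - (c + e1) * (dx * (- S - l) + dy * (C + k))"
      by (simp add: algebra_simps)
    hence a: "((c + e1) * (S + l) - s * (C + k)) * dx = 0" using q1 q2 by simp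
    have "((c + e1) * (S + l) - s * (C + k)) * dy = (S + l) * (dx * (- s) + dy * (c + e1)) - s * (dx * (- S - l) + dy * (C + k))"
      by (simp add: algebra_simps)
    hence b: "((c + e1) * (S + l) - s * (C + k)) * dy = 0" using q1 q2 by simp
    show False using a b h dne by simp
  qed
  show hC: "C = lam * (c + e1) - k"
  proof -
    have "lam * n = (C + k) * (c + e1) + (S + l) * s" unfolding lam_def using npos by simp
    hence "lam * n * (c + e1) = (C + k) * n"
      using cross unfolding n_def by algebra
    hence "lam * (c + e1) = C + k" using npos
      by (metis mult.commute mult.left_commute mult_right_cancel order_less_irrefl)
    thus ?thesis by simp
  qed
  show hS: "S = lam * s - l"
  proof -
    have "lam * n = (C + k) * (c + e1) + (S + l) * s" unfolding lam_def using npos by simp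
    hence "lam * n * s = (S + l) * n"
      using cross unfolding n_def by algebra
    hence "lam * s = S + l" using npos
      by (metis mult.commute mult.left_commute mult_right_cancel order_less_irrefl)
    thus ?thesis by simp
  qed
  have u1n: "1 + e1 * c \<noteq> 0" and u2n: "1 + k * C + l * S \<noteq> 0" using u1 u2 by auto
  have g: "(p1 * x / u - p2 * y / v) * (u * v) = p1 * x * v - p2 * y * u" if "u \<noteq> 0" "v \<noteq> 0" for x y u v :: real
    using that by (simp add: field_simps)
  have gx: "dx * ((1 + e1 * c) * (1 + k * C + l * S)) = p1 * c * (1 + k * C + l * S) - p2 * C * (1 + e1 * c)"
    unfolding dx_def using g[OF u1n u2n] .
  have gy: "dy * ((1 + e1 * c) * (1 + k * C + l * S)) = p1 * s * (1 + k * C + l * S) - p2 * S * (1 + e1 * c)"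
    unfolding dy_def using g[OF u1n u2n] .
  have B: "p1 * (1 + k * C + l * S) * e1 * s + p2 * (1 + e1 * c) * (C * s - S * (c + e1)) = 0"
  proof -
    have "0 = (dx * (- s) + dy * (c + e1)) * ((1 + e1 * c) * (1 + k * C + l * S))" using q1 by simp
    also have "\<dots> = (dx * ((1 + e1 * c) * (1 + k * C + l * S))) * (- s) + (dy * ((1 + e1 * c) * (1 + k * C + l * S))) * (c + e1)"
      by (simp add: algebra_simps)
    also have "\<dots> = (p1 * c * (1 + k * C + l * S) - p2 * C * (1 + e1 * c)) * (- s) + (p1 * s * (1 + k * C + l * S) - p2 * S * (1 + e1 * c)) * (c + e1)"
      by (simp only: gx gy)
    also have "\<dots> = p1 * (1 + k * C + l * S) * e1 * s + p2 * (1 + e1 * c) * (C * s - S * (c + e1))"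
      by (simp add: algebra_simps)
    finally show ?thesis by simp
  qed
  show "lam * (p1 * e1 * s * E) = - (p1 * e1 * s * (1 - k^2 - l^2) + p2 * (1 + e1 * c) * F)"
    using B unfolding E_def F_def hC hS by (simp add: algebra_simps power2_eq_square)
  show "n * lam^2 - 2 * E * lam - (1 - k^2 - l^2) = 0"
    using CS unfolding E_def n_def hC hS by (simp add: algebra_simps power2_eq_square)
qed
definition Cz :: "complex poly" where "Cz = [:1/2, 0, 1/2:]"
definition Sz :: "complex poly" where "Sz = [:\<i>/2, 0, -\<i>/2:]"
definition Zp :: "complex poly" where "Zp = [:0, 1:]"

lemma Cz_eval: "poly Cz (cis a) = cis a * complex_of_real (cos a)"
proof -
  have "cos a ^ 2 + sin a ^ 2 = 1" by simp
  thus ?thesis unfolding Cz_def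
    by (simp add: complex_eq_iff power2_eq_square algebra_simps) (simp add: field_simps power2_eq_square)
qed

lemma Sz_eval: "poly Sz (cis a) = cis a * complex_of_real (sin a)"
proof -
  have h: "cos a * cos a + sin a * sin a = 1" using sin_cos_squared_add[of a] by (simp add: power2_eq_square)
  show ?thesis unfolding Sz_def
    apply (simp add: complex_eq_iff power2_eq_square algebra_simps)
    apply (simp add: field_simps power2_eq_square)
    using h by algebra
qed

lemma Zp_eval: "poly Zp z = z" unfolding Zp_def by simp

lemma degs: "degree Cz \<le> 2" "degree Sz \<le> 2" "degree Zp \<le> 1"
  unfolding Cz_def Sz_def Zp_def by (auto simp: degree_pCons_eq_if)
definition Ep :: "real \<Rightarrow> real \<Rightarrow> real \<Rightarrow> complex poly" where
  "Ep e1 k l = smult (of_real k) (Cz + smult (of_real e1) Zp) + smult (of_real l) Sz"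
definition Fp :: "real \<Rightarrow> real \<Rightarrow> real \<Rightarrow> complex poly" where
  "Fp e1 k l = smult (of_real l) (Cz + smult (of_real e1) Zp) - smult (of_real k) Sz"
definition Np :: "real \<Rightarrow> complex poly" where
  "Np e1 = Zp + smult (of_real (2 * e1)) Cz + smult (of_real (e1^2)) Zp"
definition U1p :: "real \<Rightarrow> complex poly" where
  "U1p e1 = Zp + smult (of_real e1) Cz"
definition Kp :: "real \<Rightarrow> real \<Rightarrow> real \<Rightarrow> real \<Rightarrow> complex poly" where
  "Kp p1 e1 k l = smult (of_real (p1 * e1)) (Sz * Ep e1 k l)"
definition Mp :: "real \<Rightarrow> real \<Rightarrow> real \<Rightarrow> real \<Rightarrow> real \<Rightarrow> complex poly" where
  "Mp p1 p2 e1 k l = - (smult (of_real (p1 * e1 * (1 - k^2 - l^2))) (Zp * Sz) + smult (of_real p2) (U1p e1 * Fp e1 k l))"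
definition Rp :: "real \<Rightarrow> real \<Rightarrow> real \<Rightarrow> real \<Rightarrow> real \<Rightarrow> complex poly" where
  "Rp p1 p2 e1 k l = (Mp p1 p2 e1 k l)^2 * Np e1 - smult 2 (Mp p1 p2 e1 k l * Kp p1 e1 k l * Ep e1 k l)
      - smult (of_real (1 - k^2 - l^2)) (Zp * (Kp p1 e1 k l)^2)"

lemma Ep_eval: "poly (Ep e1 k l) (cis a) = cis a * of_real (k * (cos a + e1) + l * sin a)"
  unfolding Ep_def by (simp add: Cz_eval Sz_eval Zp_eval algebra_simps)
lemma Fp_eval: "poly (Fp e1 k l) (cis a) = cis a * of_real (l * (cos a + e1) - k * sin a)"
  unfolding Fp_def by (simp add: Cz_eval Sz_eval Zp_eval algebra_simps)
lemma Np_eval: "poly (Np e1) (cis a) = cis a * of_real ((cos a + e1)^2 + (sin a)^2)"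
proof -
  have "(cos a + e1)^2 + (sin a)^2 = 1 + 2 * e1 * cos a + e1^2"
    using sin_cos_squared_add[of a] by (simp add: power2_eq_square algebra_simps)
  thus ?thesis unfolding Np_def by (simp add: Cz_eval Sz_eval Zp_eval algebra_simps)
qed
lemma U1p_eval: "poly (U1p e1) (cis a) = cis a * of_real (1 + e1 * cos a)"
  unfolding U1p_def by (simp add: Cz_eval Sz_eval Zp_eval algebra_simps)
lemma Kp_eval: "poly (Kp p1 e1 k l) (cis a) = (cis a)^2 * of_real (p1 * e1 * sin a * (k * (cos a + e1) + l * sin a))"
  unfolding Kp_def by (simp add: Ep_eval Sz_eval power2_eq_square algebra_simps)
lemma Mp_eval: "poly (Mp p1 p2 e1 k l) (cis a) = (cis a)^2 *
   of_real (- (p1 * e1 * sin a * (1 - k^2 - l^2) + p2 * (1 + e1 * cos a) * (l * (cos a + e1) - k * sin a)))"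
  unfolding Mp_def by (simp add: Fp_eval U1p_eval Sz_eval Zp_eval power2_eq_square algebra_simps)
definition Rval :: "real \<Rightarrow> real \<Rightarrow> real \<Rightarrow> real \<Rightarrow> real \<Rightarrow> real" where
  "Rval M K E n c = M^2 * n - 2 * M * K * E - c * K^2"

lemma Rp_shape:
  fixes z :: complex and M K E n c :: real
  shows "(z^2 * of_real M)^2 * (z * of_real n) - 2 * ((z^2 * of_real M) * (z^2 * of_real K) * (z * of_real E))
     - of_real c * (z * (z^2 * of_real K)^2) = z^5 * of_real (Rval M K E n c)"
  unfolding Rval_def by (simp add: algebra_simps power2_eq_square eval_nat_numeral)

lemma Rp_eval: "poly (Rp p1 p2 e1 k l) (cis a) = (cis a)^5 *
   of_real (Rval (- (p1 * e1 * sin a * (1 - k^2 - l^2) + p2 * (1 + e1 * cos a) * (l * (cos a + e1) - k * sin a)))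
      (p1 * e1 * sin a * (k * (cos a + e1) + l * sin a)) (k * (cos a + e1) + l * sin a)
      ((cos a + e1)^2 + (sin a)^2) (1 - k^2 - l^2))"
  unfolding Rp_def
  apply (simp only: poly_diff poly_mult poly_power poly_smult Mp_eval Np_eval Kp_eval Ep_eval Zp_eval)
  apply (rule trans[OF _ Rp_shape])
  apply (simp only: mult_2 distrib_right)
  done

lemma deg_smult_le: "degree p \<le> n \<Longrightarrow> degree (smult a p) \<le> n"
  using degree_smult_le le_trans by blast
lemma deg_add_le: "degree p \<le> n \<Longrightarrow> degree q \<le> n \<Longrightarrow> degree (p + q) \<le> n"
  by (rule degree_add_le)
lemma deg_diff_le: "degree p \<le> n \<Longrightarrow> degree q \<le> n \<Longrightarrow> degree (p - q) \<le> (n::nat)" for p q :: "complex poly"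
  by (rule degree_diff_le)
lemma deg_mult_le: "degree p \<le> m \<Longrightarrow> degree q \<le> n \<Longrightarrow> degree (p * q) \<le> m + n"
  by (meson add_le_mono degree_mult_le le_trans)
lemma deg_le_mono: "degree p \<le> m \<Longrightarrow> m \<le> n \<Longrightarrow> degree p \<le> n" by simp

lemma deg_Ep: "degree (Ep e1 k l) \<le> 2"
  unfolding Ep_def by (intro deg_add_le deg_smult_le degs deg_le_mono[OF degs(3)]) auto
lemma deg_Fp: "degree (Fp e1 k l) \<le> 2"
  unfolding Fp_def by (intro deg_diff_le deg_add_le deg_smult_le degs deg_le_mono[OF degs(3)]) auto
lemma deg_Np: "degree (Np e1) \<le> 2"
  unfolding Np_def by (intro deg_add_le deg_smult_le degs deg_le_mono[OF degs(3)]) auto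
lemma deg_U1p: "degree (U1p e1) \<le> 2"
  unfolding U1p_def by (intro deg_add_le deg_smult_le degs deg_le_mono[OF degs(3)]) auto
lemma deg_Kp: "degree (Kp p1 e1 k l) \<le> 4"
  unfolding Kp_def using deg_mult_le[OF degs(2) deg_Ep] by (intro deg_smult_le) auto
lemma deg_Mp: "degree (Mp p1 p2 e1 k l) \<le> 4"
proof -
  have "degree (Zp * Sz) \<le> 4" using deg_mult_le[OF degs(3) degs(2)] by simp
  moreover have "degree (U1p e1 * Fp e1 k l) \<le> 4" using deg_mult_le[OF deg_U1p deg_Fp] by simp
  ultimately show ?thesis unfolding Mp_def degree_minus by (intro deg_add_le deg_smult_le)
qed
lemma deg_Rp: "degree (Rp p1 p2 e1 k l) \<le> 10"
proof -
  have a: "degree ((Mp p1 p2 e1 k l)^2 * Np e1) \<le> 10"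
    using deg_mult_le[OF deg_mult_le[OF deg_Mp deg_Mp] deg_Np] by (simp add: power2_eq_square)
  have b: "degree (Mp p1 p2 e1 k l * Kp p1 e1 k l * Ep e1 k l) \<le> 10"
    using deg_mult_le[OF deg_mult_le[OF deg_Mp deg_Kp] deg_Ep] by simp
  have c0: "degree (Zp * (Kp p1 e1 k l * Kp p1 e1 k l)) \<le> 1 + (4 + 4)"
    by (rule deg_mult_le[OF degs(3) deg_mult_le[OF deg_Kp deg_Kp]])
  have c: "degree (Zp * (Kp p1 e1 k l)^2) \<le> 10"
    using c0 by (simp add: power2_eq_square)
  show ?thesis unfolding Rp_def
    by (intro deg_diff_le deg_smult_le a b c)
qed

lemma Rp_nonzero:
  assumes "l \<noteq> 0" "p2 > 0" "e1 \<ge> 0"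
  shows "Rp p1 p2 e1 k l \<noteq> 0"
proof
  assume "Rp p1 p2 e1 k l = 0"
  hence "poly (Rp p1 p2 e1 k l) (cis 0) = 0" by simp
  hence "complex_of_real ((p2 * (1 + e1) * (l * (1 + e1)))^2 * (1 + e1)^2) = 0"
    unfolding Rp_eval Rval_def by (simp add: power2_eq_square)
  hence "(p2 * (1 + e1) * (l * (1 + e1)))^2 * (1 + e1)^2 = 0" by (simp only: of_real_eq_0_iff)
  thus False using assms by simp
qed
lemma count_lemma:
  fixes S :: "(real \<times> real) set" and P :: "complex poly" and g :: "real \<Rightarrow> complex"
  assumes P: "P \<noteq> 0" and inj: "inj_on g (fst ` S)"
    and root: "\<And>a b. (a,b) \<in> S \<Longrightarrow> poly P (g a) = 0"
    and fib: "\<And>a. a \<in> fst ` S \<Longrightarrow> finite {b. (a,b) \<in> S} \<and> card {b. (a,b) \<in> S} \<le> order (g a) P"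
  shows "finite S \<and> card S \<le> degree P"
proof -
  have fin_roots: "finite {z. poly P z = 0}" using poly_roots_finite[OF P] .
  have sub: "g ` fst ` S \<subseteq> {z. poly P z = 0}" using root by force
  have finA: "finite (fst ` S)"
    using finite_imageD[OF finite_subset[OF sub fin_roots] inj] .
  have Seq: "S = (\<Union>a\<in>fst ` S. (\<lambda>b. (a,b)) ` {b. (a,b) \<in> S})" by force
  have finS: "finite S"
    by (subst Seq, intro finite_UN_I finA finite_imageI) (use fib in auto)
  have "card S = (\<Sum>a\<in>fst ` S. card ((\<lambda>b. (a,b)) ` {b. (a,b) \<in> S}))"
    by (subst Seq, rule card_UN_disjoint) (use finA fib in auto)
  also have "\<dots> = (\<Sum>a\<in>fst ` S. card {b. (a,b) \<in> S})"
    by (intro sum.cong refl card_image) (auto simp: inj_on_def)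
  also have "\<dots> \<le> (\<Sum>a\<in>fst ` S. order (g a) P)"
    by (intro sum_mono) (use fib in auto)
  also have "\<dots> = (\<Sum>z\<in>g ` fst ` S. order z P)"
    by (rule sum.reindex[OF inj, symmetric, unfolded comp_def])
  also have "\<dots> \<le> (\<Sum>z | poly P z = 0. order z P)"
    by (intro sum_mono2 fin_roots sub) auto
  also have "\<dots> \<le> degree P" by (rule sum_order_le_degree[OF P])
  finally show ?thesis using finS by simp
qed
lemma fact2: "2*a*(m*x) + 2*b*(m*y) = (2*m)*(a*x + b*y)" for a b m x y :: real
  by (simp add: algebra_simps)

lemma crit_eqs:
  assumes p1: "p1 > 0" and p2: "p2 > 0" and e1: "0 \<le> e1" "e1 < 1" and e2: "0 \<le> e2" "e2 < 1"
    and cp: "crit_point p1 p2 e1 e2 om2 f1 f2"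
  shows "(p1 / (1 + e1 * cos f1) * cos f1 - p2 / (1 + e2 * cos f2) * cos (f2 + om2)) * (- sin f1)
       + (p1 / (1 + e1 * cos f1) * sin f1 - p2 / (1 + e2 * cos f2) * sin (f2 + om2)) * (cos f1 + e1) = 0"
    "(p1 / (1 + e1 * cos f1) * cos f1 - p2 / (1 + e2 * cos f2) * cos (f2 + om2)) * (- sin (f2 + om2) - e2 * sin om2)
       + (p1 / (1 + e1 * cos f1) * sin f1 - p2 / (1 + e2 * cos f2) * sin (f2 + om2)) * (cos (f2 + om2) + e2 * cos om2) = 0"
proof -
  have u1: "1 + e1 * cos f1 > 0" using pos_den e1 by blast
  have u2: "1 + e2 * cos f2 > 0" using pos_den e2 by blast
  let ?A = "p2 / (1 + e2 * cos f2) * cos (f2 + om2)"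
  let ?B = "p2 / (1 + e2 * cos f2) * sin (f2 + om2)"
  have fe: "(\<lambda>x. dist2 p1 p2 e1 e2 om2 x f2) =
     (\<lambda>x. (p1 / (1 + e1 * cos x) * cos (x + 0) - ?A)\<^sup>2 + (p1 / (1 + e1 * cos x) * sin (x + 0) - ?B)\<^sup>2)"
    unfolding dist2_def X1_def X2_def by simp
  have d1: "((\<lambda>x. dist2 p1 p2 e1 e2 om2 x f2) has_real_derivative
     (2 * (p1 / (1 + e1 * cos f1) * cos (f1 + 0) - ?A) * (p1/(1+e1*cos f1)^2 * (- sin (f1 + 0) - e1 * sin 0))
      + 2 * (p1 / (1 + e1 * cos f1) * sin (f1 + 0) - ?B) * (p1/(1+e1*cos f1)^2 * (cos (f1 + 0) + e1 * cos 0)))) (at f1)"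
    unfolding fe by (rule deriv_gen) (use u1 in linarith)
  have z1: "(2 * (p1 / (1 + e1 * cos f1) * cos (f1 + 0) - ?A) * (p1/(1+e1*cos f1)^2 * (- sin (f1 + 0) - e1 * sin 0))
      + 2 * (p1 / (1 + e1 * cos f1) * sin (f1 + 0) - ?B) * (p1/(1+e1*cos f1)^2 * (cos (f1 + 0) + e1 * cos 0))) = 0"
    using DERIV_unique[OF d1] cp unfolding crit_point_def by blast
  have "(2 * (p1/(1+e1*cos f1)^2)) * ((p1 / (1 + e1 * cos f1) * cos f1 - ?A) * (- sin f1)
       + (p1 / (1 + e1 * cos f1) * sin f1 - ?B) * (cos f1 + e1)) = 0"
    using z1 unfolding fact2 by (simp only: add_0_right sin_zero cos_zero mult_zero_right diff_zero mult_1_right)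
  moreover have "2 * (p1/(1+e1*cos f1)^2) \<noteq> 0" using p1 u1 by simp
  ultimately show "(p1 / (1 + e1 * cos f1) * cos f1 - ?A) * (- sin f1)
       + (p1 / (1 + e1 * cos f1) * sin f1 - ?B) * (cos f1 + e1) = 0" by simp
  let ?C = "p1 / (1 + e1 * cos f1) * cos f1"
  let ?D = "p1 / (1 + e1 * cos f1) * sin f1"
  have fe2: "(\<lambda>y. dist2 p1 p2 e1 e2 om2 f1 y) =
     (\<lambda>y. (?C - p2 / (1 + e2 * cos y) * cos (y + om2))\<^sup>2 + (?D - p2 / (1 + e2 * cos y) * sin (y + om2))\<^sup>2)"
    unfolding dist2_def X1_def X2_def by simp
  have d2: "((\<lambda>y. dist2 p1 p2 e1 e2 om2 f1 y) has_real_derivative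
     (2 * (p2 / (1 + e2 * cos f2) * cos (f2 + om2) - ?C) * (p2/(1+e2*cos f2)^2 * (- sin (f2 + om2) - e2 * sin om2))
      + 2 * (p2 / (1 + e2 * cos f2) * sin (f2 + om2) - ?D) * (p2/(1+e2*cos f2)^2 * (cos (f2 + om2) + e2 * cos om2)))) (at f2)"
    unfolding fe2 by (rule deriv_gen_neg) (use u2 in linarith)
  have z2: "(2 * (p2 / (1 + e2 * cos f2) * cos (f2 + om2) - ?C) * (p2/(1+e2*cos f2)^2 * (- sin (f2 + om2) - e2 * sin om2))
      + 2 * (p2 / (1 + e2 * cos f2) * sin (f2 + om2) - ?D) * (p2/(1+e2*cos f2)^2 * (cos (f2 + om2) + e2 * cos om2))) = 0"
    using DERIV_unique[OF d2] cp unfolding crit_point_def by blast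
  have "(2 * (p2/(1+e2*cos f2)^2)) * ((?A - ?C) * (- sin (f2 + om2) - e2 * sin om2)
       + (?B - ?D) * (cos (f2 + om2) + e2 * cos om2)) = 0"
    using z2 unfolding fact2 .
  moreover have "2 * (p2/(1+e2*cos f2)^2) \<noteq> 0" using p2 u2 by simp
  ultimately have "(?A - ?C) * (- sin (f2 + om2) - e2 * sin om2)
       + (?B - ?D) * (cos (f2 + om2) + e2 * cos om2) = 0" by simp
  hence "- ((?C - ?A) * (- sin (f2 + om2) - e2 * sin om2)
       + (?D - ?B) * (cos (f2 + om2) + e2 * cos om2)) = 0" by (simp add: algebra_simps)
  thus "(?C - ?A) * (- sin (f2 + om2) - e2 * sin om2)
       + (?D - ?B) * (cos (f2 + om2) + e2 * cos om2) = 0" by linarith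
qed
lemma ang_unique2:
  assumes "x \<in> {0..<2*pi}" "y \<in> {0..<2*pi}" "sin (x + w) = sin (y + w)" "cos (x + w) = cos (y + w)"
  shows "x = y"
proof -
  obtain n :: int where n: "x + w = y + w + 2 * pi * n" using sin_cos_eq_iff assms(3,4) by metis
  hence xy: "x - y = 2 * pi * n" by simp
  have "\<bar>x - y\<bar> < 2 * pi" using assms(1,2) by auto
  hence "\<bar>2 * pi * n\<bar> < 2 * pi * 1" using xy by simp
  hence "\<bar>real_of_int n\<bar> < 1" by (simp add: abs_mult)
  hence "n = 0" by linarith
  thus ?thesis using xy by simp
qed

lemma cos_shift: "e2 * cos f2 = (e2 * cos om2) * cos (f2 + om2) + (e2 * sin om2) * sin (f2 + om2)" for e2 f2 om2 :: real
proof -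
  have "cos f2 = cos ((f2 + om2) - om2)" by simp
  also have "\<dots> = cos (f2 + om2) * cos om2 + sin (f2 + om2) * sin om2" by (simp only: cos_diff)
  finally show ?thesis by (simp add: algebra_simps)
qed

lemma crit_core:
  assumes p1: "p1 > 0" and p2: "p2 > 0" and e1: "0 \<le> e1" "e1 < 1" and e2: "0 \<le> e2" "e2 < 1"
    and cp: "crit_point p1 p2 e1 e2 om2 f1 f2" and nd: "dist2 p1 p2 e1 e2 om2 f1 f2 \<noteq> 0"
  defines "k \<equiv> e2 * cos om2" and "l \<equiv> e2 * sin om2"
  defines "lam \<equiv> ((cos (f2 + om2) + k) * (cos f1 + e1) + (sin (f2 + om2) + l) * sin f1) / ((cos f1 + e1)^2 + (sin f1)^2)"
  shows "cos (f2 + om2) = lam * (cos f1 + e1) - k" "sin (f2 + om2) = lam * sin f1 - l"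
    "lam * (p1 * e1 * sin f1 * (k * (cos f1 + e1) + l * sin f1)) =
      - (p1 * e1 * sin f1 * (1 - k^2 - l^2) + p2 * (1 + e1 * cos f1) * (l * (cos f1 + e1) - k * sin f1))"
    "((cos f1 + e1)^2 + (sin f1)^2) * lam^2 - 2 * (k * (cos f1 + e1) + l * sin f1) * lam - (1 - k^2 - l^2) = 0"
proof -
  have cs: "e2 * cos f2 = k * cos (f2 + om2) + l * sin (f2 + om2)" unfolding k_def l_def by (rule cos_shift)
  have u1: "1 + e1 * cos f1 > 0" using pos_den e1 by blast
  have u2: "1 + k * cos (f2 + om2) + l * sin (f2 + om2) > 0" using pos_den[OF e2, of f2] cs by simp
  note ce = crit_eqs[OF p1 p2 e1 e2 cp, unfolded cs add.assoc[symmetric]]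
  have ne: "(p1 * cos f1 / (1 + e1 * cos f1), p1 * sin f1 / (1 + e1 * cos f1)) \<noteq>
     (p2 * cos (f2 + om2) / (1 + k * cos (f2 + om2) + l * sin (f2 + om2)), p2 * sin (f2 + om2) / (1 + k * cos (f2 + om2) + l * sin (f2 + om2)))"
    using nd unfolding dist2_def X1_def X2_def cs add.assoc[symmetric] by auto
  have eq1: "(p1 * cos f1 / (1 + e1 * cos f1) - p2 * cos (f2 + om2) / (1 + k * cos (f2 + om2) + l * sin (f2 + om2))) * (- sin f1)
            + (p1 * sin f1 / (1 + e1 * cos f1) - p2 * sin (f2 + om2) / (1 + k * cos (f2 + om2) + l * sin (f2 + om2))) * (cos f1 + e1) = 0"
    using ce(1) by simp
  have eq2: "(p1 * cos f1 / (1 + e1 * cos f1) - p2 * cos (f2 + om2) / (1 + k * cos (f2 + om2) + l * sin (f2 + om2))) * (- sin (f2 + om2) - l)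
            + (p1 * sin f1 / (1 + e1 * cos f1) - p2 * sin (f2 + om2) / (1 + k * cos (f2 + om2) + l * sin (f2 + om2))) * (cos (f2 + om2) + k) = 0"
    using ce(2) unfolding k_def l_def by simp
  note r = core[OF sin_cos_squared_add2[of f1] sin_cos_squared_add2[of "f2 + om2"] e1 u1 u2 eq1 eq2 ne]
  show "cos (f2 + om2) = lam * (cos f1 + e1) - k" "sin (f2 + om2) = lam * sin f1 - l"
    "lam * (p1 * e1 * sin f1 * (k * (cos f1 + e1) + l * sin f1)) =
      - (p1 * e1 * sin f1 * (1 - k^2 - l^2) + p2 * (1 + e1 * cos f1) * (l * (cos f1 + e1) - k * sin f1))"
    "((cos f1 + e1)^2 + (sin f1)^2) * lam^2 - 2 * (k * (cos f1 + e1) + l * sin f1) * lam - (1 - k^2 - l^2) = 0"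
    using r unfolding lam_def by simp_all
qed
lemma inter_core:
  assumes p1: "p1 > 0" and p2: "p2 > 0" and e1: "0 \<le> e1" "e1 < 1" and e2: "0 \<le> e2" "e2 < 1"
    and d0: "dist2 p1 p2 e1 e2 om2 f1 f2 = 0"
  shows "cos (f2 + om2) = cos f1" "sin (f2 + om2) = sin f1"
    "(p1 - p2) + (p1 * (e2 * cos om2) - p2 * e1) * cos f1 + p1 * (e2 * sin om2) * sin f1 = 0"
proof -
  have u1: "1 + e1 * cos f1 > 0" using pos_den e1 by blast
  have u2: "1 + e2 * cos f2 > 0" using pos_den e2 by blast
  define r1 where "r1 = p1 / (1 + e1 * cos f1)"
  define r2 where "r2 = p2 / (1 + e2 * cos f2)"
  have r1p: "r1 > 0" unfolding r1_def using p1 u1 by simp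
  have r2p: "r2 > 0" unfolding r2_def using p2 u2 by simp
  have "(r1 * cos f1 - r2 * cos (f2 + om2))^2 + (r1 * sin f1 - r2 * sin (f2 + om2))^2 = 0"
    using d0 unfolding dist2_def X1_def X2_def r1_def r2_def by simp
  hence hx: "r1 * cos f1 = r2 * cos (f2 + om2)" and hy: "r1 * sin f1 = r2 * sin (f2 + om2)"
    by (simp_all add: add_nonneg_eq_0_iff)
  have "r1^2 = r1^2 * ((sin f1)^2 + (cos f1)^2)" by simp
  also have "\<dots> = (r1 * cos f1)^2 + (r1 * sin f1)^2" by algebra
  also have "\<dots> = (r2 * cos (f2 + om2))^2 + (r2 * sin (f2 + om2))^2" using hx hy by simp
  also have "\<dots> = r2^2 * ((sin (f2 + om2))^2 + (cos (f2 + om2))^2)" by algebra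
  also have "\<dots> = r2^2" by simp
  finally have "r1^2 = r2^2" .
  hence r12: "r1 = r2" using r1p r2p by (simp add: power2_eq_iff)
  show cc: "cos (f2 + om2) = cos f1" using hx r12 r2p by simp
  show ss: "sin (f2 + om2) = sin f1" using hy r12 r2p by simp
  have "p1 * (1 + e2 * cos f2) = p2 * (1 + e1 * cos f1)"
    using r12 u1 u2 unfolding r1_def r2_def by (simp add: field_simps)
  hence "p1 * (1 + (e2 * cos om2) * cos f1 + (e2 * sin om2) * sin f1) = p2 * (1 + e1 * cos f1)"
    unfolding cos_shift[of e2 f2 om2] cc ss by (simp add: algebra_simps)
  thus "(p1 - p2) + (p1 * (e2 * cos om2) - p2 * e1) * cos f1 + p1 * (e2 * sin om2) * sin f1 = 0"
    by (simp add: algebra_simps)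
qed
definition Gp :: "real \<Rightarrow> real \<Rightarrow> real \<Rightarrow> real \<Rightarrow> real \<Rightarrow> complex poly" where
  "Gp p1 p2 e1 k l = smult (of_real (p1 - p2)) Zp + smult (of_real (p1 * k - p2 * e1)) Cz + smult (of_real (p1 * l)) Sz"

lemma Gp_eval: "poly (Gp p1 p2 e1 k l) (cis a) = cis a * of_real ((p1 - p2) + (p1 * k - p2 * e1) * cos a + p1 * l * sin a)"
  unfolding Gp_def by (simp add: Cz_eval Sz_eval Zp_eval algebra_simps)

lemma deg_Gp: "degree (Gp p1 p2 e1 k l) \<le> 2"
  unfolding Gp_def by (intro deg_add_le deg_smult_le degs deg_le_mono[OF degs(3)]) auto

lemma cis_mult_of_real_0: "cis a * complex_of_real r = 0 \<Longrightarrow> r = 0"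
  by (simp only: mult_eq_0_iff cis_neq_zero of_real_eq_0_iff simp_thms)

lemma Gp_nonzero: assumes "p1 * l \<noteq> 0" shows "Gp p1 p2 e1 k l \<noteq> 0"
proof
  assume h: "Gp p1 p2 e1 k l = 0"
  have "poly (Gp p1 p2 e1 k l) (cis (pi/2)) = 0" using h by simp
  hence "(p1 - p2) + (p1 * k - p2 * e1) * cos (pi/2) + p1 * l * sin (pi/2) = 0"
    unfolding Gp_eval by (rule cis_mult_of_real_0)
  hence a: "(p1 - p2) + p1 * l = 0" by simp
  have "poly (Gp p1 p2 e1 k l) (cis (-(pi/2))) = 0" using h by simp
  hence "(p1 - p2) + (p1 * k - p2 * e1) * cos (-(pi/2)) + p1 * l * sin (-(pi/2)) = 0"
    unfolding Gp_eval by (rule cis_mult_of_real_0)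
  hence b: "(p1 - p2) - p1 * l = 0" by simp
  from a b assms show False by simp
qed

lemma Rzero: "lam * K = M \<Longrightarrow> n * lam^2 - 2 * E * lam - c = 0 \<Longrightarrow> M^2 * n - 2 * M * K * E - c * K^2 = 0"
  for lam K M n E c :: real
proof -
  assume h1: "lam * K = M" and h2: "n * lam^2 - 2 * E * lam - c = 0"
  have "M^2 * n - 2 * M * K * E - c * K^2 = K^2 * (n * lam^2 - 2 * E * lam - c)"
    unfolding h1[symmetric] by algebra
  thus ?thesis using h2 by simp
qed

lemma n_pos: "0 \<le> e1 \<Longrightarrow> e1 < 1 \<Longrightarrow> (cos a + e1)^2 + (sin a)^2 > 0" for a e1 :: real
proof -
  assume e: "0 \<le> e1" "e1 < 1"
  have eq: "(cos a + e1)^2 + (sin a)^2 = 1 + 2 * (e1 * cos a) + e1^2"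
    using sin_cos_squared_add[of a] by algebra
  have h1: "e1 * cos a \<ge> - e1" using e cos_ge_minus_one[of a]
    by (metis minus_mult_right mult.right_neutral mult_left_mono neg_le_iff_le)
  have h2: "(1 - e1)^2 > 0" using e by simp
  have h3: "(1 - e1)^2 = 1 - 2 * e1 + e1^2" by algebra
  show ?thesis unfolding eq using h1 h2 h3 by linarith
qed

lemma Rp_dvd:
  assumes "poly (Kp p1 e1 k l) z = 0" "poly (Mp p1 p2 e1 k l) z = 0"
  shows "[:-z, 1:]^2 dvd Rp p1 p2 e1 k l"
proof -
  let ?d = "[:-z, 1:]"
  have dK: "?d dvd Kp p1 e1 k l" and dM: "?d dvd Mp p1 p2 e1 k l" using assms poly_eq_0_iff_dvd by blast+
  have a: "?d^2 dvd (Mp p1 p2 e1 k l)^2 * Np e1"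
    using dvd_power_same[OF dM, of 2] by (rule dvd_mult2)
  have "?d * ?d dvd Mp p1 p2 e1 k l * Kp p1 e1 k l" by (rule mult_dvd_mono[OF dM dK])
  hence b: "?d^2 dvd smult 2 (Mp p1 p2 e1 k l * Kp p1 e1 k l * Ep e1 k l)"
    by (simp add: power2_eq_square dvd_mult2 dvd_smult)
  have "?d^2 dvd (Kp p1 e1 k l)^2" using dvd_power_same[OF dK, of 2] .
  hence c: "?d^2 dvd smult (of_real (1 - k^2 - l^2)) (Zp * (Kp p1 e1 k l)^2)"
    by (simp add: dvd_mult dvd_smult)
  show ?thesis unfolding Rp_def by (intro dvd_diff a b c)
qed
lemma cis_inj_02pi: "inj_on cis {0..<2*pi}"
proof (rule inj_onI)
  fix x y assume x: "x \<in> {0..<2*pi}" and y: "y \<in> {0..<2*pi}" and h: "cis x = cis y"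
  have "sin (x + 0) = sin (y + 0)" "cos (x + 0) = cos (y + 0)" using h by (simp_all add: complex_eq_iff)
  thus "x = y" using ang_unique2[OF x y] by blast
qed

lemma main_bounds:
  assumes p1: "p1 > 0" and p2: "p2 > 0" and e1: "0 \<le> e1" "e1 < 1" and e2: "0 \<le> e2" "e2 < 1"
    and nz: "e2 * sin om2 \<noteq> 0"
  shows "finite {(f1, f2) \<in> crit_points p1 p2 e1 e2 om2. dist2 p1 p2 e1 e2 om2 f1 f2 \<noteq> 0} \<and>
          card {(f1, f2) \<in> crit_points p1 p2 e1 e2 om2. dist2 p1 p2 e1 e2 om2 f1 f2 \<noteq> 0} \<le> 10 \<and>
          finite (crit_points p1 p2 e1 e2 om2) \<and>
          card (crit_points p1 p2 e1 e2 om2) \<le> 12"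
proof -
  define k where "k = e2 * cos om2"
  define l where "l = e2 * sin om2"
  have l0: "l \<noteq> 0" using nz unfolding l_def .
  define S where "S = {(f1, f2) \<in> crit_points p1 p2 e1 e2 om2. dist2 p1 p2 e1 e2 om2 f1 f2 \<noteq> 0}"
  define T where "T = {(f1, f2) \<in> crit_points p1 p2 e1 e2 om2. dist2 p1 p2 e1 e2 om2 f1 f2 = 0}"
  have Sm: "(a, b) \<in> S \<longleftrightarrow> a \<in> {0..<2*pi} \<and> b \<in> {0..<2*pi} \<and> crit_point p1 p2 e1 e2 om2 a b \<and> dist2 p1 p2 e1 e2 om2 a b \<noteq> 0" for a b
    unfolding S_def crit_points_def by auto
  have Tm: "(a, b) \<in> T \<Longrightarrow> a \<in> {0..<2*pi} \<and> b \<in> {0..<2*pi} \<and> dist2 p1 p2 e1 e2 om2 a b = 0" for a b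
    unfolding T_def crit_points_def by auto
  define P where "P = Rp p1 p2 e1 k l"
  have P0: "P \<noteq> 0" unfolding P_def using Rp_nonzero l0 p2 e1 by blast
  define lamf where "lamf a b = ((cos (b + om2) + k) * (cos a + e1) + (sin (b + om2) + l) * sin a) / ((cos a + e1)^2 + (sin a)^2)" for a b
  define Kf where "Kf a = p1 * e1 * sin a * (k * (cos a + e1) + l * sin a)" for a
  define Mf where "Mf a = - (p1 * e1 * sin a * (1 - k^2 - l^2) + p2 * (1 + e1 * cos a) * (l * (cos a + e1) - k * sin a))" for a
  define Ef where "Ef a = k * (cos a + e1) + l * sin a" for a
  define nf where "nf a = (cos a + e1)^2 + (sin a)^2" for a
  have cc: "cos (b + om2) = lamf a b * (cos a + e1) - k" "sin (b + om2) = lamf a b * sin a - l"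
    "lamf a b * Kf a = Mf a" "nf a * (lamf a b)^2 - 2 * Ef a * lamf a b - (1 - k^2 - l^2) = 0"
    if "(a, b) \<in> S" for a b
    using crit_core[OF p1 p2 e1 e2, of om2 a b] that unfolding Sm lamf_def Kf_def Mf_def Ef_def nf_def k_def l_def
    by auto
  have rootS: "poly P (cis a) = 0" if "(a, b) \<in> S" for a b
  proof -
    have h: "Rval (Mf a) (Kf a) (Ef a) (nf a) (1 - k^2 - l^2) = 0"
      unfolding Rval_def by (rule Rzero[OF cc(3)[OF that] cc(4)[OF that]])
    have "poly P (cis a) = (cis a)^5 * of_real (Rval (Mf a) (Kf a) (Ef a) (nf a) (1 - k^2 - l^2))"
      unfolding P_def Rp_eval Mf_def Kf_def Ef_def nf_def by (rule refl)
    thus ?thesis using h by simp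
  qed
  have injS: "inj_on cis (fst ` S)"
    by (rule inj_on_subset[OF cis_inj_02pi]) (auto simp: Sm)
  have fibS: "finite {b. (a, b) \<in> S} \<and> card {b. (a, b) \<in> S} \<le> order (cis a) P" if "a \<in> fst ` S" for a
  proof -
    define F where "F = {b. (a, b) \<in> S}"
    from that obtain x0 where x0: "x0 \<in> S" "a = fst x0" by blast
    define b0 where "b0 = snd x0"
    have b0: "(a, b0) \<in> S" using x0 unfolding b0_def by simp
    have injl: "inj_on (lamf a) F"
    proof (rule inj_onI)
      fix x y assume x: "x \<in> F" and y: "y \<in> F" and h: "lamf a x = lamf a y"
      have xs: "(a, x) \<in> S" "(a, y) \<in> S" using x y unfolding F_def by auto
      have "sin (x + om2) = sin (y + om2)"
        unfolding cc(2)[OF xs(1)] cc(2)[OF xs(2)] h by (rule refl)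
      moreover have "cos (x + om2) = cos (y + om2)"
        unfolding cc(1)[OF xs(1)] cc(1)[OF xs(2)] h by (rule refl)
      moreover have "x \<in> {0..<2*pi}" "y \<in> {0..<2*pi}" using xs unfolding Sm by auto
      ultimately show "x = y" using ang_unique2[of x y om2] by blast
    qed
    define Q where "Q = [:- (1 - k^2 - l^2), - 2 * Ef a, nf a:]"
    have npos: "nf a > 0" unfolding nf_def using n_pos e1 by blast
    have Q0: "Q \<noteq> 0" unfolding Q_def using npos by auto
    have degQ: "degree Q \<le> 2" unfolding Q_def by (auto simp: degree_pCons_eq_if)
    have imQ: "lamf a ` F \<subseteq> {x. poly Q x = 0}"
    proof
      fix x assume "x \<in> lamf a ` F"
      then obtain b where b: "b \<in> F" "x = lamf a b" by auto
      have "nf a * x^2 - 2 * Ef a * x - (1 - k^2 - l^2) = 0" using cc(4)[of a b] b unfolding F_def by auto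
      thus "x \<in> {x. poly Q x = 0}" unfolding Q_def by (simp add: algebra_simps power2_eq_square)
    qed
    have finim: "finite (lamf a ` F)" using finite_subset[OF imQ poly_roots_finite[OF Q0]] .
    have finF: "finite F" using finite_imageD[OF finim injl] .
    have cardF: "card F = card (lamf a ` F)" using card_image[OF injl] by simp
    have card2: "card F \<le> 2"
      using cardF card_mono[OF poly_roots_finite[OF Q0] imQ] card_poly_roots_bound[OF Q0] degQ by linarith
    have rt: "poly P (cis a) = 0" using rootS[OF b0] .
    have "order (cis a) P \<noteq> 0" using rt P0 order_root by blast
    hence ord1: "order (cis a) P \<ge> 1" by simp
    have "card F \<le> order (cis a) P"
    proof (cases "Kf a = 0")
      case True
      have M0: "Mf a = 0" using cc(3)[OF b0] True by simp
      have me: "poly (Mp p1 p2 e1 k l) (cis a) = (cis a)^2 * of_real (Mf a)"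
        unfolding Mp_eval Mf_def by (rule refl)
      have ke: "poly (Kp p1 e1 k l) (cis a) = (cis a)^2 * of_real (Kf a)"
        unfolding Kp_eval Kf_def by (rule refl)
      have "[:- cis a, 1:]^2 dvd P" unfolding P_def
        by (rule Rp_dvd) (simp_all only: me ke M0 True of_real_0 mult_zero_right)
      hence "2 \<le> order (cis a) P" using P0 order_divides by blast
      thus ?thesis using card2 by linarith
    next
      case False
      have "lamf a ` F \<subseteq> {Mf a / Kf a}"
      proof
        fix x assume "x \<in> lamf a ` F"
        then obtain b where b: "b \<in> F" "x = lamf a b" by auto
        have "x * Kf a = Mf a" using cc(3)[of a b] b unfolding F_def by auto
        thus "x \<in> {Mf a / Kf a}" using False by (simp add: field_simps)
      qed
      hence "card (lamf a ` F) \<le> 1" using card_mono[of "{Mf a / Kf a}"] by simp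
      thus ?thesis using cardF ord1 by linarith
    qed
    thus ?thesis using finF unfolding F_def by blast
  qed
  have degP: "degree P \<le> 10" unfolding P_def by (rule deg_Rp)
  have cS: "finite S \<and> card S \<le> degree P"
    by (rule count_lemma[OF P0 injS rootS fibS]) auto
  define G where "G = Gp p1 p2 e1 k l"
  have G0: "G \<noteq> 0" unfolding G_def using Gp_nonzero p1 l0 by simp
  have rootT: "poly G (cis a) = 0" if "(a, b) \<in> T" for a b
  proof -
    have "(p1 - p2) + (p1 * k - p2 * e1) * cos a + p1 * l * sin a = 0"
      using inter_core(3)[OF p1 p2 e1 e2, of om2 a b] Tm[OF that] unfolding k_def l_def by blast
    thus ?thesis unfolding G_def Gp_eval by simp
  qed
  have injT: "inj_on cis (fst ` T)"
    by (rule inj_on_subset[OF cis_inj_02pi]) (auto dest: Tm)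
  have fibT: "finite {b. (a, b) \<in> T} \<and> card {b. (a, b) \<in> T} \<le> order (cis a) G" if "a \<in> fst ` T" for a
  proof -
    from that obtain x0 where x0: "x0 \<in> T" "a = fst x0" by blast
    define b0 where "b0 = snd x0"
    have b0: "(a, b0) \<in> T" using x0 unfolding b0_def by simp
    have sub: "{b. (a, b) \<in> T} \<subseteq> {b0}"
    proof
      fix b assume b: "b \<in> {b. (a, b) \<in> T}"
      have "sin (b + om2) = sin (b0 + om2)" "cos (b + om2) = cos (b0 + om2)"
        using inter_core(1,2)[OF p1 p2 e1 e2, of om2 a b] inter_core(1,2)[OF p1 p2 e1 e2, of om2 a b0]
          Tm[OF b0] Tm b by auto
      moreover have "b \<in> {0..<2*pi}" "b0 \<in> {0..<2*pi}" using Tm[OF b0] Tm b by auto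
      ultimately show "b \<in> {b0}" using ang_unique2[of b b0 om2] by blast
    qed
    have "order (cis a) G \<noteq> 0" using rootT[OF b0] G0 order_root by blast
    hence "order (cis a) G \<ge> 1" by simp
    moreover have "card {b. (a, b) \<in> T} \<le> 1" using card_mono[OF _ sub] by simp
    ultimately show ?thesis using finite_subset[OF sub] by simp
  qed
  have cT: "finite T \<and> card T \<le> degree G"
    by (rule count_lemma[OF G0 injT rootT fibT]) auto
  have degG: "degree G \<le> 2" unfolding G_def by (rule deg_Gp)
  have CU: "crit_points p1 p2 e1 e2 om2 = S \<union> T" unfolding S_def T_def by auto
  have "card (S \<union> T) \<le> card S + card T" by (rule card_Un_le)
  thus ?thesis using cS cT degP degG CU unfolding S_def[symmetric] by auto
qed

theorem mainTheorem3:
  "\<exists>Z :: (real \<times> real \<times> real \<times> real \<times> real) set.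
     closed Z \<and> Z \<in> null_sets lborel \<and>
     (\<forall>p1 p2 e1 e2 om2.
        p1 > 0 \<longrightarrow> p2 > 0 \<longrightarrow> 0 \<le> e1 \<longrightarrow> e1 < 1 \<longrightarrow> 0 \<le> e2 \<longrightarrow> e2 < 1 \<longrightarrow>
        (p1, p2, e1, e2, om2) \<notin> Z \<longrightarrow>
          finite {(f1, f2) \<in> crit_points p1 p2 e1 e2 om2. dist2 p1 p2 e1 e2 om2 f1 f2 \<noteq> 0} \<and>
          card {(f1, f2) \<in> crit_points p1 p2 e1 e2 om2. dist2 p1 p2 e1 e2 om2 f1 f2 \<noteq> 0} \<le> 10 \<and>
          finite (crit_points p1 p2 e1 e2 om2) \<and>
          card (crit_points p1 p2 e1 e2 om2) \<le> 12)"
  apply (rule exI[of _ Zs])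
  apply (intro conjI Zs_closed Zs_null)
  apply (intro allI impI)
  apply (rule main_bounds)
  apply (auto simp: Zs_def)
  done

end
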